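(* Let $\mathbb{F}_q$ be a finite field, $m$ a positive divisor of $q-1$, $n$ a positive integer, and $f(x)=x^nh\big(x^{\frac{q-1}{m}}\big)\in\mathbb{F}_q[x]$ a polynomial with index $m$ which is $m$-nice over $\mathbb{F}_q$. Let $k$ be a positive integer and $b\in\mathbb{F}_q^*$. If $x\in\mathbb{F}_q$ satisfies $f^{(k)}(x)=b$, then $x^{\frac{q-1}{m}}=\psi_f^{(-k)}\big(b^{\frac{q-1}{m}}\big)$.
   Context: $\mu_m$ is the set of $m$-th roots of unity in $\mathbb{F}_q$. Every $f$ with $f(0)=0$ can be written uniquely as $f(x)=x^nh(x^{\frac{q-1}{m}})$ with $h(0)\ne0$ and $m$ minimal; $m$ is the index. $\psi_f(x)=x^nh(x)^{\frac{q-1}{m}}$, and $f^{(k)},\psi_f^{(k)}$ denote iterates. $f$ is $m$-nice if $\psi_f$ restricted to $\mu_m\setminus\psi_f^{-1}(0)$ is an injective map into $\mu_m$. For $y\in\mu_m$, $\psi_f^{(-k)}(y)$ denotes the element $\xi\in\mu_m$ with $\psi_f^{(k)}(\xi)=y$ (unique by $m$-niceness). *)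

theory Defs
  imports "HOL-Computational_Algebra.Polynomial" "HOL-Library.Cardinality"
begin

text \<open>The finite field F_q is a type 'a of class finite and field; q = CARD('a).\<close>

definition mu :: "nat \<Rightarrow> ('a::{finite,field}) set" where
  "mu m = {x. x ^ m = 1}"

definition has_form :: "('a::{finite,field}) poly \<Rightarrow> nat \<Rightarrow> nat \<Rightarrow> 'a poly \<Rightarrow> bool" where
  "has_form f m n h \<longleftrightarrow> 0 < m \<and> m dvd (CARD('a) - 1) \<and> poly h 0 \<noteq> 0 \<and>
     f = monom 1 n * pcompose h (monom 1 ((CARD('a) - 1) div m))"

definition index :: "('a::{finite,field}) poly \<Rightarrow> nat" where
  "index f = (LEAST m. \<exists>n h. has_form f m n h)"

definition psi :: "nat \<Rightarrow> ('a::{finite,field}) poly \<Rightarrow> nat \<Rightarrow> 'a \<Rightarrow> 'a" where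
  "psi n h m x = x ^ n * poly h x ^ ((CARD('a) - 1) div m)"

definition m_nice :: "nat \<Rightarrow> ('a::{finite,field}) poly \<Rightarrow> nat \<Rightarrow> bool" where
  "m_nice n h m \<longleftrightarrow>
     (let D = mu m - {x. psi n h m x = 0} in inj_on (psi n h m) D \<and> psi n h m ` D \<subseteq> mu m)"

definition psi_inv_iter :: "nat \<Rightarrow> ('a::{finite,field}) poly \<Rightarrow> nat \<Rightarrow> nat \<Rightarrow> 'a \<Rightarrow> 'a" where
  "psi_inv_iter n h m k y = (THE xi. xi \<in> mu m \<and> (psi n h m ^^ k) xi = y)"

end

theory Submission
  imports Defs
begin

lemma fermat_ff:
  fixes x :: "'a::{finite,field}"
  assumes "x \<noteq> 0"
  shows "x ^ (CARD('a) - 1) = 1"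
proof -
  let ?S = "UNIV - {0::'a}"
  have bij: "bij_betw (\<lambda>y. x * y) ?S ?S"
    unfolding bij_betw_def
  proof
    show "inj_on (\<lambda>y. x * y) ?S" using assms by (auto simp: inj_on_def)
    show "(\<lambda>y. x * y) ` ?S = ?S"
    proof
      show "(\<lambda>y. x * y) ` ?S \<subseteq> ?S" using assms by auto
      show "?S \<subseteq> (\<lambda>y. x * y) ` ?S"
      proof
        fix z assume "z \<in> ?S"
        then have "z = x * (z / x)" "z / x \<in> ?S" using assms by auto
        then show "z \<in> (\<lambda>y. x * y) ` ?S" by blast
      qed
    qed
  qed
  have "prod (\<lambda>y. x * y) ?S = prod id ?S"
    using prod.reindex_bij_betw[OF bij, of id] by simp
  moreover have "prod (\<lambda>y. x * y) ?S = x ^ card ?S * prod id ?S"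
    by (simp add: prod.distrib)
  moreover have "prod id ?S \<noteq> 0" by simp
  moreover have "card ?S = CARD('a) - 1" by (simp add: card_Diff_singleton)
  ultimately show ?thesis by auto
qed

lemma psi_f_pow:
  fixes f h :: "('a::{finite,field}) poly"
  assumes "has_form f m n h"
  shows "poly f x ^ ((CARD('a) - 1) div m) = psi n h m (x ^ ((CARD('a) - 1) div m))"
  using assms unfolding has_form_def psi_def
  by (simp add: poly_pcompose poly_monom power_mult_distrib power_mult[symmetric] mult.commute)

lemma iter_pow:
  fixes f h :: "('a::{finite,field}) poly"
  assumes "has_form f m n h"
  shows "((poly f ^^ k) x) ^ ((CARD('a) - 1) div m) = (psi n h m ^^ k) (x ^ ((CARD('a) - 1) div m))"
proof (induction k)
  case (Suc k)
  show ?case using Suc.IH psi_f_pow[OF assms, of "(poly f ^^ k) x"] by (simp only: funpow.simps o_apply)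
qed simp

lemma f_zero:
  fixes f h :: "('a::{finite,field}) poly"
  assumes "has_form f m n h" "0 < n"
  shows "(poly f ^^ k) 0 = 0"
proof -
  have "poly f 0 = 0" using assms unfolding has_form_def by (simp add: poly_monom)
  then show ?thesis by (induction k) auto
qed

lemma psi_zero:
  assumes "0 < n"
  shows "psi n h m 0 = 0"
  using assms unfolding psi_def by simp

lemma psi_iter_mu:
  fixes h :: "('a::{finite,field}) poly"
  assumes "m_nice n h m" "0 < n" "xi \<in> mu m" "(psi n h m ^^ k) xi \<noteq> 0" "j \<le> k"
  shows "(psi n h m ^^ j) xi \<in> mu m \<and> (psi n h m ^^ j) xi \<noteq> 0"
  using assms(5)
proof (induction j)
  case 0
  have "(psi n h m ^^ 0) xi \<noteq> 0"
  proof
    assume z: "(psi n h m ^^ 0) xi = 0"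
    have "(psi n h m ^^ (i + 0)) xi = 0" for i
      by (induction i) (use z psi_zero[OF assms(2)] in auto)
    from this[of k] assms(4) show False by simp
  qed
  then show ?case using assms(3) by simp
next
  case (Suc j)
  let ?p = "psi n h m"
  have a: "(?p ^^ j) xi \<in> mu m" using Suc by simp
  have nz: "(?p ^^ Suc j) xi \<noteq> 0"
  proof
    assume z: "(?p ^^ Suc j) xi = 0"
    have "(?p ^^ (i + Suc j)) xi = 0" for i
      by (induction i) (use z psi_zero[OF assms(2)] in auto)
    from this[of "k - Suc j"] assms(4) Suc.prems show False by simp
  qed
  then have "?p ((?p ^^ j) xi) \<noteq> 0" by simp
  then have "?p ((?p ^^ j) xi) \<in> mu m"
    using assms(1) a unfolding m_nice_def Let_def by auto
  then show ?case using nz by simp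
qed

lemma psi_iter_inj:
  fixes h :: "('a::{finite,field}) poly"
  assumes "m_nice n h m" "0 < n"
  shows "\<And>x1 x2. x1 \<in> mu m \<Longrightarrow> x2 \<in> mu m \<Longrightarrow> (psi n h m ^^ k) x1 = (psi n h m ^^ k) x2
     \<Longrightarrow> (psi n h m ^^ k) x1 \<noteq> 0 \<Longrightarrow> x1 = x2"
proof (induction k)
  case 0
  then show ?case by simp
next
  case (Suc k)
  let ?p = "psi n h m"
  have m1: "(?p ^^ k) x1 \<in> mu m" "(?p ^^ k) x2 \<in> mu m"
    using psi_iter_mu[OF assms(1,2) Suc.prems(1) Suc.prems(4), of k]
      psi_iter_mu[OF assms(1,2) Suc.prems(2), of "Suc k" k] Suc.prems(3,4) by auto
  have nz: "?p ((?p ^^ k) x1) \<noteq> 0" "?p ((?p ^^ k) x2) \<noteq> 0"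
    using Suc.prems(3,4) by auto
  have inj: "inj_on ?p (mu m - {x. ?p x = 0})"
    using assms(1) unfolding m_nice_def Let_def by auto
  have "(?p ^^ k) x1 = (?p ^^ k) x2"
    using inj_onD[OF inj] m1 nz Suc.prems(3) by auto
  moreover have "(?p ^^ k) x1 \<noteq> 0"
    using psi_iter_mu[OF assms(1,2) Suc.prems(1) Suc.prems(4), of k] by auto
  ultimately show ?case using Suc.IH Suc.prems(1,2) by blast
qed

theorem lemma3p5:
  fixes f h :: "('a::{finite,field}) poly" and m n k :: nat and b x :: 'a
  assumes "0 < m" and "m dvd (CARD('a) - 1)" and "0 < n"
    and "has_form f m n h" and "index f = m"
    and "m_nice n h m"
    and "0 < k" and "b \<noteq> 0"
    and "(poly f ^^ k) x = b"
  shows "x ^ ((CARD('a) - 1) div m) = psi_inv_iter n h m k (b ^ ((CARD('a) - 1) div m))"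
proof -
  let ?d = "(CARD('a) - 1) div m"
  let ?p = "psi n h m"
  have dm: "?d * m = CARD('a) - 1" using assms(2) by simp
  have x0: "x \<noteq> 0" using f_zero[OF assms(4,3), of k] assms(8,9) by auto
  have xmu: "x ^ ?d \<in> mu m"
    unfolding mu_def using fermat_ff[OF x0] dm by (simp add: power_mult[symmetric])
  have eq: "(?p ^^ k) (x ^ ?d) = b ^ ?d"
    using iter_pow[OF assms(4), of k x] assms(9) by simp
  have bnz: "b ^ ?d \<noteq> 0" using assms(8) by simp
  show ?thesis
    unfolding psi_inv_iter_def
  proof (rule the_equality[symmetric])
    show "x ^ ?d \<in> mu m \<and> (?p ^^ k) (x ^ ?d) = b ^ ?d" using xmu eq by simp
    fix xi assume "xi \<in> mu m \<and> (?p ^^ k) xi = b ^ ?d"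
    then show "xi = x ^ ?d"
      using psi_iter_inj[OF assms(6,3), of xi "x ^ ?d" k] xmu eq bnz by auto
  qed
qed

end
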